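(* Let $\Gamma$ be a Shilla distance-regular graph with $b(\Gamma)=b$ and eigenvalues $\theta_0>\theta_1>\theta_2>\theta_3$. Then: (i) $q^2_{11}>0$; (ii) $q^3_{11}\geq 0$ if and only if $\theta_3\geq -\frac{b(bb_2+c_2)}{b_2+c_2}$. In particular, $\theta_3\geq -\frac{b(bb_2+c_2)}{b_2+c_2}$.
   Context: A connected graph $\Gamma$ of diameter $D$ is distance-regular if there are integers $b_i,c_i$ ($0\le i\le D$) such that for any two vertices $x,y$ at distance $i$, exactly $c_i$ neighbours of $y$ are at distance $i-1$ from $x$ and exactly $b_i$ neighbours of $y$ are at distance $i+1$ from $x$. Then $\Gamma$ is regular of valency $k=b_0$, and $a_i:=k-b_i-c_i$. Its eigenvalues (of the adjacency matrix) are $k=\theta_0>\theta_1>\dots>\theta_D$. A Shilla distance-regular graph is a distance-regular graph of diameter $3$ whose second largest eigenvalue satisfies $\theta_1=a_3$; for such graphs $k=(a_3-a_1)a_3$ and $b(\Gamma):=a_3-a_1=k/a_3$. Let $n$ be the number of vertices and $E_i$ the orthogonal projection onto the eigenspace of $\theta_i$. The Krein parameters $q^h_{ij}$ are defined by $E_i\circ E_j=\frac1n\sum_{h=0}^D q^h_{ij}E_h$, where $\circ$ is the entrywise product. *)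

theory Defs
  imports "HOL-Analysis.Analysis"
begin

definition graph_dist :: "('v \<Rightarrow> 'v \<Rightarrow> bool) \<Rightarrow> 'v \<Rightarrow> 'v \<Rightarrow> nat" where
  "graph_dist G x y = (LEAST m. (G ^^ m) x y)"

definition simple_graph :: "('v \<Rightarrow> 'v \<Rightarrow> bool) \<Rightarrow> bool" where
  "simple_graph G \<longleftrightarrow> (\<forall>x y. G x y \<longrightarrow> G y x) \<and> (\<forall>x. \<not> G x x)"

definition connected_graph :: "('v \<Rightarrow> 'v \<Rightarrow> bool) \<Rightarrow> bool" where
  "connected_graph G \<longleftrightarrow> (\<forall>x y. \<exists>m. (G ^^ m) x y)"

definition graph_diameter :: "('v::finite \<Rightarrow> 'v \<Rightarrow> bool) \<Rightarrow> nat" where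
  "graph_diameter G = Max {graph_dist G x y | x y. True}"

text \<open>Distance-regular with intersection arrays b, c (meaningful for 0 \<le> i \<le> D).\<close>
definition distance_regular ::
  "('v::finite \<Rightarrow> 'v \<Rightarrow> bool) \<Rightarrow> (nat \<Rightarrow> nat) \<Rightarrow> (nat \<Rightarrow> nat) \<Rightarrow> bool" where
  "distance_regular G b c \<longleftrightarrow> simple_graph G \<and> connected_graph G \<and>
     (\<forall>x y. card {z. G y z \<and> graph_dist G x z + 1 = graph_dist G x y} = c (graph_dist G x y)
          \<and> card {z. G y z \<and> graph_dist G x z = graph_dist G x y + 1} = b (graph_dist G x y))"

definition isect_a :: "(nat \<Rightarrow> nat) \<Rightarrow> (nat \<Rightarrow> nat) \<Rightarrow> nat \<Rightarrow> int" where
  "isect_a b c i = int (b 0) - int (b i) - int (c i)"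

definition adj_matrix :: "('v::finite \<Rightarrow> 'v \<Rightarrow> bool) \<Rightarrow> real^'v^'v" where
  "adj_matrix G = (\<chi> i j. if G i j then 1 else 0)"

definition eigenvalues_of :: "real^'v^'v \<Rightarrow> real set" where
  "eigenvalues_of A = {\<theta>. \<exists>v. v \<noteq> 0 \<and> A *v v = \<theta> *\<^sub>R v}"

definition eigenspace_of :: "real^'v^'v \<Rightarrow> real \<Rightarrow> (real^'v) set" where
  "eigenspace_of A \<theta> = {v. A *v v = \<theta> *\<^sub>R v}"

definition eig_proj :: "real^'v::finite^'v \<Rightarrow> real \<Rightarrow> real^'v^'v" where
  "eig_proj A \<theta> = (THE P. transpose P = P \<and> P ** P = P \<and> range (\<lambda>v. P *v v) = eigenspace_of A \<theta>)"

definition hadamard :: "real^'v^'v \<Rightarrow> real^'v^'v \<Rightarrow> real^'v^'v" where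
  "hadamard P Q = (\<chi> i j. P $ i $ j * Q $ i $ j)"

definition krein :: "real^'v::finite^'v \<Rightarrow> (nat \<Rightarrow> real) \<Rightarrow> nat \<Rightarrow> nat \<Rightarrow> nat \<Rightarrow> nat \<Rightarrow> real" where
  "krein A \<theta> D i j h = (THE q :: nat \<Rightarrow> real. (\<forall>l>D. q l = 0) \<and>
      hadamard (eig_proj A (\<theta> i)) (eig_proj A (\<theta> j))
        = (1 / real CARD('v)) *\<^sub>R (\<Sum>l\<le>D. q l *\<^sub>R eig_proj A (\<theta> l))) h"

end

theory Submission imports Defs "HOL-Computational_Algebra.Polynomial" begin

locale drg3 =
  fixes G :: "'v::finite \<Rightarrow> 'v \<Rightarrow> bool" and b c :: "nat \<Rightarrow> nat"
  assumes drg: "distance_regular G b c" and diam: "graph_diameter G = 3"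
begin

abbreviation "d \<equiv> graph_dist G"

lemma sym: "G x y \<Longrightarrow> G y x" and irr: "\<not> G x x" and conn: "\<exists>m. (G ^^ m) x y"
  using drg unfolding distance_regular_def simple_graph_def connected_graph_def by auto

lemma cnt_c: "card {z. G y z \<and> d x z + 1 = d x y} = c (d x y)"
  and cnt_b: "card {z. G y z \<and> d x z = d x y + 1} = b (d x y)"
  using drg unfolding distance_regular_def by auto

lemma d_path: "(G ^^ d x y) x y"
  unfolding graph_dist_def using conn by (rule LeastI_ex)

lemma d_le: "(G ^^ m) x y \<Longrightarrow> d x y \<le> m"
  unfolding graph_dist_def by (rule Least_le)

lemma relpow_sym: "(G ^^ m) x y \<Longrightarrow> (G ^^ m) y x"
proof (induction m arbitrary: y)
  case 0 then show ?case by simp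
next
  case (Suc m)
  then obtain z where "(G ^^ m) x z" "G z y" by (auto simp: relpowp_Suc_right)
  then have "(G ^^ m) z x" "G y z" using Suc sym by auto
  then have "(G OO G ^^ m) y x" by auto
  then show ?case by (simp add: relpowp_commute relpowp_Suc_right)
qed

lemma d_sym: "d x y = d y x"
  using d_le[OF relpow_sym[OF d_path[of x y]]] d_le[OF relpow_sym[OF d_path[of y x]]] by simp

lemma d_0_iff: "d x y = 0 \<longleftrightarrow> x = y"
proof
  assume "d x y = 0" then show "x = y" using d_path[of x y] by simp
next
  assume "x = y" then show "d x y = 0" using d_le[of 0 x y] by simp
qed

lemma d_tri: "G y z \<Longrightarrow> d x z \<le> d x y + 1"
  using d_path[of x y] by (intro d_le) (auto simp: relpowp_Suc_right)

lemma d_tri2: "G y z \<Longrightarrow> d x y \<le> d x z + 1"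
  using d_tri[of z y x] sym by auto

lemma d_adj: "G x y \<Longrightarrow> d x y = 1"
  using d_tri[of x y x] d_0_iff[of x x] d_0_iff[of x y] irr by fastforce

lemma adj_d: "d x y = 1 \<Longrightarrow> G x y"
  using d_path[of x y] by auto

lemma deg: "card {z. G x z} = b 0"
proof -
  have "{z. G x z} = {z. G x z \<and> d x z = d x x + 1}"
    using d_adj d_0_iff by auto
  then show ?thesis using cnt_b[of x x] d_0_iff[of x x] by simp
qed

lemma c0: "c 0 = 0"
  using cnt_c[of x x] d_0_iff[of x x] by simp

lemma diam_set: "{d x y | x y. True} = (\<lambda>(x,y). d x y) ` UNIV"
  by auto

lemma d_le3: "d x y \<le> 3"
proof -
  have "finite {d x y | x y. True}" unfolding diam_set by simp
  then have "d x y \<le> Max {d x y | x y. True}" by (intro Max_ge) auto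
  then show ?thesis using diam unfolding graph_diameter_def by simp
qed

lemma d_ex3: "\<exists>x y. d x y = 3"
proof -
  have "finite {d x y | x y. True}" "{d x y | x y. True} \<noteq> {}" unfolding diam_set by auto
  then have "Max {d x y | x y. True} \<in> {d x y | x y. True}" by (rule Max_in)
  then show ?thesis using diam unfolding graph_diameter_def by auto
qed

lemma card_pos: "z \<in> {u::'v. P u} \<Longrightarrow> card {u. P u} > 0"
  by (auto simp: card_gt_0_iff)

lemma pos_facts: "b 0 > 0" "b 1 > 0" "b 2 > 0" "c 1 = 1" "c 2 > 0" "c 3 > 0"
proof -
  obtain x y where xy: "d x y = 3" using d_ex3 by blast
  have "(G ^^ (2+1)) x y" using d_path[of x y] xy by simp
  then obtain z where z: "(G ^^ 2) x z" "G z y" unfolding relpowp_add by auto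
  have dz: "d x z = 2" using d_le[OF z(1)] d_tri[OF z(2), of x] xy by simp
  have "(G ^^ (1+1)) x z" by (subst one_add_one) (rule z(1))
  then obtain w where w: "(G ^^ 1) x w" "G w z" unfolding relpowp_add by auto
  have dw: "d x w = 1" using d_le[OF w(1)] d_tri[OF w(2), of x] dz by simp
  have gw: "G x w" using w(1) by auto
  have "z \<in> {u. G y u \<and> d x u + 1 = d x y}" using xy dz z(2) sym by auto
  from card_pos[OF this] show "c 3 > 0" using cnt_c[of y x] xy by simp
  have "y \<in> {u. G z u \<and> d x u = d x z + 1}" using xy dz z(2) by auto
  from card_pos[OF this] show "b 2 > 0" using cnt_b[of z x] dz by simp
  have "w \<in> {u. G z u \<and> d x u + 1 = d x z}" using dw dz w(2) sym by auto
  from card_pos[OF this] show "c 2 > 0" using cnt_c[of z x] dz by simp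
  have "z \<in> {u. G w u \<and> d x u = d x w + 1}" using dw dz w(2) by auto
  from card_pos[OF this] show "b 1 > 0" using cnt_b[of w x] dw by simp
  have "w \<in> {u. G x u}" using gw by auto
  from card_pos[OF this] show "b 0 > 0" unfolding deg .
  have "{u. G w u \<and> d x u + 1 = d x w} = {x}"
    using dw gw sym d_0_iff by auto
  then show "c 1 = 1" using cnt_c[of w x] dw by simp
qed

abbreviation "A \<equiv> adj_matrix G"

definition BM :: "(nat \<Rightarrow> real) \<Rightarrow> real^'v^'v" where "BM f = (\<chi> x y. f (d x y))"

definition aa :: "nat \<Rightarrow> real" where "aa i = real (b 0) - real (b i) - real (c i)"

definition T :: "(nat \<Rightarrow> real) \<Rightarrow> nat \<Rightarrow> real" where
  "T f i = real (c i) * f (i - 1) + aa i * f i + real (b i) * f (i+1)"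

lemma nbr_sum: "(\<Sum>z\<in>UNIV. (if G x z then f (d z y) else 0)) = T f (d x y)"
proof -
  define D where "D = d y x"
  define Sm where "Sm = {z. G x z \<and> d y z + 1 = D}"
  define Sp where "Sp = {z. G x z \<and> d y z = D + 1}"
  define S0 where "S0 = {z. G x z \<and> d y z = D}"
  have N: "{z. G x z} = Sm \<union> S0 \<union> Sp"
    unfolding Sm_def Sp_def S0_def D_def using d_tri[of x _ y] d_tri2[of x _ y] by fastforce
  have disj: "Sm \<inter> S0 = {}" "(Sm \<union> S0) \<inter> Sp = {}" unfolding Sm_def Sp_def S0_def by auto
  have cm: "card Sm = c D" unfolding Sm_def D_def by (rule cnt_c)
  have cp: "card Sp = b D" unfolding Sp_def D_def by (rule cnt_b)
  have cN: "card Sm + card S0 + card Sp = b 0"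
    using deg[of x] unfolding N by (simp add: card_Un_disjoint disj)
  have "(\<Sum>z\<in>UNIV. (if G x z then f (d z y) else 0)) = (\<Sum>z\<in>{z. G x z}. f (d z y))"
    by (simp add: sum.If_cases)
  also have "\<dots> = (\<Sum>z\<in>Sm. f (d z y)) + (\<Sum>z\<in>S0. f (d z y)) + (\<Sum>z\<in>Sp. f (d z y))"
    unfolding N by (simp add: sum.union_disjoint disj)
  also have "(\<Sum>z\<in>Sm. f (d z y)) = (\<Sum>z\<in>Sm. f (D - 1))"
    by (rule sum.cong) (auto simp: Sm_def d_sym)
  also have "(\<Sum>z\<in>S0. f (d z y)) = (\<Sum>z\<in>S0. f D)"
    by (rule sum.cong) (auto simp: S0_def d_sym)
  also have "(\<Sum>z\<in>Sp. f (d z y)) = (\<Sum>z\<in>Sp. f (D + 1))"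
    by (rule sum.cong) (auto simp: Sp_def d_sym)
  finally have "(\<Sum>z\<in>UNIV. (if G x z then f (d z y) else 0)) =
     real (card Sm) * f (D - 1) + real (card S0) * f D + real (card Sp) * f (D + 1)" by simp
  moreover have "real (card S0) = aa D" using cN cm cp unfolding aa_def by linarith
  ultimately show ?thesis unfolding T_def cm cp D_def by (simp add: d_sym)
qed

lemma A_BM: "A ** BM f = BM (T f)"
proof -
  have "(A ** BM f) $ x $ y = BM (T f) $ x $ y" for x y
  proof -
    have "(A ** BM f) $ x $ y = (\<Sum>z\<in>UNIV. (if G x z then f (d z y) else 0))"
      unfolding matrix_matrix_mult_def adj_matrix_def BM_def by (auto intro: sum.cong)
    then show ?thesis using nbr_sum[of x f y] unfolding BM_def by simp
  qed
  then show ?thesis by (simp add: vec_eq_iff)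
qed

lemma BM_cong: "(\<And>i. i \<le> 3 \<Longrightarrow> f i = g i) \<Longrightarrow> BM f = BM g"
  unfolding BM_def using d_le3 by (simp add: vec_eq_iff)

lemma BM_add: "BM (\<lambda>i. f i + g i) = BM f + BM g"
  and BM_scale: "BM (\<lambda>i. r * f i) = r *\<^sub>R BM f"
  and BM_diff: "BM (\<lambda>i. f i - g i) = BM f - BM g"
  unfolding BM_def by (simp_all add: vec_eq_iff)

lemma BM_0: "BM (\<lambda>i. if i = 0 then 1 else 0) = mat 1"
  unfolding BM_def mat_def using d_0_iff by (simp add: vec_eq_iff)

lemma BM_1: "BM (\<lambda>i. if i = 1 then 1 else 0) = A"
  unfolding BM_def adj_matrix_def using d_adj adj_d by (auto simp: vec_eq_iff)

lemma BM_zero: "BM (\<lambda>i. 0) = 0"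
  unfolding BM_def by (simp add: vec_eq_iff)

end


lemma mat_add_rdistrib: "((A::real^'n^'n) + B) ** C = A ** C + B ** C"
  by (simp add: matrix_matrix_mult_def vec_eq_iff sum.distrib algebra_simps)
lemma mat_diff_rdistrib: "((A::real^'n^'n) - B) ** C = A ** C - B ** C"
  by (simp add: matrix_matrix_mult_def vec_eq_iff sum_subtractf algebra_simps)
lemma mat_diff_ldistrib: "(C::real^'n^'n) ** (A - B) = C ** A - C ** B"
  by (simp add: matrix_matrix_mult_def vec_eq_iff sum_subtractf algebra_simps)
lemma mat_scale_left: "((r::real) *\<^sub>R (A::real^'n^'n)) ** B = r *\<^sub>R (A ** B)"
  by (simp add: matrix_matrix_mult_def vec_eq_iff sum_distrib_left algebra_simps)
lemma mat_scale_right: "(A::real^'n^'n) ** ((r::real) *\<^sub>R B) = r *\<^sub>R (A ** B)"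
  by (simp add: matrix_matrix_mult_def vec_eq_iff sum_distrib_left algebra_simps)
lemma mat_sum_rdistrib: "finite S \<Longrightarrow> (\<Sum>i\<in>S. (F i::real^'n^'n)) ** C = (\<Sum>i\<in>S. F i ** C)"
  by (induction S rule: finite_induct) (auto simp: mat_add_rdistrib)
lemma mat_sum_ldistrib: "finite S \<Longrightarrow> (C::real^'n^'n) ** (\<Sum>i\<in>S. F i) = (\<Sum>i\<in>S. C ** F i)"
  by (induction S rule: finite_induct) (auto simp: matrix_add_ldistrib)
lemma mat_sum_vec: "finite S \<Longrightarrow> (\<Sum>i\<in>S. F i) *v (v::real^'n) = (\<Sum>i\<in>S. F i *v v)"
  by (induction S rule: finite_induct) (auto simp: matrix_vector_mult_add_rdistrib)

lemma mat_scale_vec: "((r::real) *\<^sub>R (A::real^'n^'n)) *v v = r *\<^sub>R (A *v v)"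
  by (simp add: matrix_vector_mult_def vec_eq_iff sum_distrib_left algebra_simps)

definition pe :: "real poly \<Rightarrow> real^'n^'n \<Rightarrow> real^'n^'n" where
  "pe p M = fold_coeffs (\<lambda>a N. a *\<^sub>R mat 1 + M ** N) p 0"

lemma pe_0[simp]: "pe 0 M = 0" by (simp add: pe_def)

lemma pe_pCons: "pe (pCons a p) M = a *\<^sub>R mat 1 + M ** pe p M"
proof (cases "p = 0")
  case True
  then show ?thesis by (cases "a = 0") (simp_all add: pe_def)
next
  case False
  then show ?thesis by (simp add: pe_def)
qed

lemma pe_add: "pe (p + q) M = pe p M + pe q M"
proof (induction p q rule: poly_induct2)
  case 0 then show ?case by simp
next
  case (pCons a p b q)
  then show ?case by (simp add: pe_pCons matrix_add_ldistrib scaleR_add_left algebra_simps)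
qed

lemma pe_smult: "pe (smult r p) M = r *\<^sub>R pe p M"
  by (induction p) (simp_all add: pe_pCons mat_scale_right scaleR_add_right)

lemma pe_minus: "pe (- p) M = - pe p M"
  using pe_smult[of "-1" p M] by simp

lemma pe_diff: "pe (p - q) M = pe p M - pe q M"
  using pe_add[of p "-q" M] pe_minus[of q M] by simp

lemma pe_const: "pe [:a:] M = a *\<^sub>R mat 1"
  by (simp add: pe_pCons)

lemma pe_one: "pe 1 M = mat 1"
  by (simp add: one_pCons pe_pCons)

lemma pe_X: "pe [:0, 1:] M = M"
  by (simp add: pe_pCons)

lemma pe_mult: "pe (p * q) M = pe p M ** pe q M"
proof (induction p)
  case 0 then show ?case by simp
next
  case (pCons a p)
  have "pe (pCons a p * q) M = a *\<^sub>R pe q M + M ** pe (p * q) M"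
    by (simp add: pe_add pe_smult pe_pCons)
  also have "\<dots> = pe (pCons a p) M ** pe q M"
    using pCons by (simp add: pe_pCons mat_add_rdistrib mat_scale_left matrix_mul_assoc)
  finally show ?case .
qed

lemma pe_comm: "pe p M ** pe q M = pe q M ** pe p M"
  by (metis pe_mult mult.commute)

lemma pe_eig_mat: "M ** E = t *\<^sub>R E \<Longrightarrow> pe p M ** E = poly p t *\<^sub>R E"
  by (induction p) (simp_all add: pe_pCons mat_add_rdistrib mat_scale_left
      matrix_mul_assoc[symmetric] mat_scale_right algebra_simps)

lemma pe_eig_vec: "M *v v = t *\<^sub>R v \<Longrightarrow> pe p M *v v = poly p t *\<^sub>R v"
  by (induction p) (simp_all add: pe_pCons matrix_vector_mult_add_rdistrib mat_scale_vec
      matrix_vector_mul_assoc[symmetric] algebra_simps)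

lemma transpose_add: "transpose ((A::real^'n^'n) + B) = transpose A + transpose B"
  by (simp add: transpose_def vec_eq_iff)
lemma transpose_scale: "transpose ((r::real) *\<^sub>R (A::real^'n^'n)) = r *\<^sub>R transpose A"
  by (simp add: transpose_def vec_eq_iff)

lemma pe_transpose: "transpose M = M \<Longrightarrow> transpose (pe p M) = pe p M"
proof (induction p)
  case 0 then show ?case by (simp add: transpose_def vec_eq_iff)
next
  case (pCons a p)
  have "transpose (M ** pe p M) = pe p M ** M"
    using pCons by (simp add: matrix_transpose_mul)
  also have "\<dots> = M ** pe p M" using pe_comm[of p M "[:0,1:]"] by (simp add: pe_X)
  finally show ?case by (simp add: pe_pCons transpose_add transpose_scale)
qed



context drg3 begin

definition "D2 = BM (\<lambda>i. if i = 2 then 1 else 0)"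
definition "D3 = BM (\<lambda>i. if i = 3 then 1 else 0)"

lemma BM_expand: "BM f = f 0 *\<^sub>R mat 1 + f 1 *\<^sub>R A + f 2 *\<^sub>R D2 + f 3 *\<^sub>R D3"
proof -
  have "BM f $ x $ y = (f 0 *\<^sub>R mat 1 + f 1 *\<^sub>R A + f 2 *\<^sub>R D2 + f 3 *\<^sub>R D3) $ x $ y" for x y
  proof -
    have "d x y = 0 \<or> d x y = 1 \<or> d x y = 2 \<or> d x y = 3" using d_le3[of x y] by linarith
    moreover have "(x = y) = (d x y = 0)" "G x y = (d x y = 1)" using d_0_iff d_adj adj_d by auto
    ultimately show ?thesis unfolding BM_def D2_def D3_def mat_def adj_matrix_def
      by auto
  qed
  then show ?thesis by (simp add: vec_eq_iff)
qed

lemma A_sym: "transpose A = A"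
  unfolding transpose_def adj_matrix_def using sym by (auto simp: vec_eq_iff)

lemma D1_eq: "A = BM (\<lambda>i. if i = 1 then 1 else 0)" by (rule BM_1[symmetric])

lemma R1: "A ** A = real (b 0) *\<^sub>R mat 1 + aa 1 *\<^sub>R A + real (c 2) *\<^sub>R D2"
proof -
  have "A ** A = BM (T (\<lambda>i. if i = 1 then 1 else 0))" by (subst (2) D1_eq) (rule A_BM)
  also have "\<dots> = real (b 0) *\<^sub>R mat 1 + aa 1 *\<^sub>R A + real (c 2) *\<^sub>R D2" by (subst BM_expand) (simp add: T_def c0)
  finally show ?thesis by simp
qed

lemma R2: "A ** D2 = real (b 1) *\<^sub>R A + aa 2 *\<^sub>R D2 + real (c 3) *\<^sub>R D3"
proof -
  have "A ** D2 = BM (T (\<lambda>i. if i = 2 then 1 else 0))" unfolding D2_def by (rule A_BM)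
  also have "\<dots> = real (b 1) *\<^sub>R A + aa 2 *\<^sub>R D2 + real (c 3) *\<^sub>R D3" by (subst BM_expand) (simp add: T_def c0)
  finally show ?thesis by simp
qed

lemma R3: "A ** D3 = real (b 2) *\<^sub>R D2 + aa 3 *\<^sub>R D3"
proof -
  have "A ** D3 = BM (T (\<lambda>i. if i = 3 then 1 else 0))" unfolding D3_def by (rule A_BM)
  also have "\<dots> = real (b 2) *\<^sub>R D2 + aa 3 *\<^sub>R D3" by (subst BM_expand) (simp add: T_def c0)
  finally show ?thesis by simp
qed

definition "V2 = smult (1 / real (c 2)) [: - real (b 0), - aa 1, 1:]"
definition "V3 = smult (1 / real (c 3)) ([: - aa 2, 1:] * V2 - smult (real (b 1)) [:0, 1:])"
definition "Q = [:0, 1:] * V3 - smult (real (b 2)) V2 - smult (aa 3) V3"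

lemma c2_pos: "real (c 2) > 0" and c3_pos: "real (c 3) > 0"
  using pos_facts by auto

lemma pe_V2: "pe V2 A = D2"
proof -
  have "pe [: - real (b 0), - aa 1, 1:] A = A ** A - real (b 0) *\<^sub>R mat 1 - aa 1 *\<^sub>R A"
    by (simp add: pe_pCons matrix_add_ldistrib mat_diff_ldistrib mat_scale_right algebra_simps)
  also have "\<dots> = real (c 2) *\<^sub>R D2" by (simp add: R1)
  finally show ?thesis unfolding V2_def pe_smult using c2_pos by simp
qed

lemma pe_V3: "pe V3 A = D3"
proof -
  have "pe ([: - aa 2, 1:] * V2 - smult (real (b 1)) [:0, 1:]) A
        = A ** D2 - aa 2 *\<^sub>R D2 - real (b 1) *\<^sub>R A"
    unfolding pe_mult pe_diff pe_smult pe_V2 pe_X by (simp add: pe_pCons mat_diff_rdistrib mat_scale_left)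
  also have "\<dots> = real (c 3) *\<^sub>R D3" by (simp add: R2)
  finally show ?thesis unfolding V3_def pe_smult using c3_pos by simp
qed

lemma pe_Q: "pe Q A = 0"
  unfolding Q_def pe_mult pe_diff pe_smult pe_V2 pe_V3 pe_X by (simp add: R3)

definition one_vec :: "real^'v" where "one_vec = (\<chi> i. 1)"

lemma A_one: "A *v one_vec = real (b 0) *\<^sub>R one_vec"
proof -
  have "(A *v one_vec) $ x = real (b 0)" for x
  proof -
    have "(A *v one_vec) $ x = (\<Sum>z\<in>UNIV. if G x z then 1 else 0)"
      unfolding matrix_vector_mult_def adj_matrix_def one_vec_def by simp
    also have "\<dots> = real (card {z. G x z})" by (simp add: sum.If_cases)
    finally show ?thesis using deg by simp
  qed
  then show ?thesis by (simp add: vec_eq_iff one_vec_def)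
qed

lemma pe_BM: "\<exists>f. pe p A = BM f"
proof (induction p)
  case 0 then show ?case using BM_zero by auto
next
  case (pCons a p)
  then obtain f where f: "pe p A = BM f" by blast
  have "pe (pCons a p) A = BM (\<lambda>i. a * (if i = 0 then 1 else 0) + T f i)"
    by (simp add: pe_pCons f A_BM BM_add BM_scale BM_0)
  then show ?case by blast
qed

end


context drg3 begin
lemma Q_coeff4: "coeff Q 4 = 1 / (real (c 2) * real (c 3))"
  unfolding Q_def V3_def V2_def by (simp add: numeral_eq_Suc)
lemma Q_deg: "degree Q \<le> 4"
  unfolding Q_def V3_def V2_def
  by (rule degree_le) (simp add: coeff_eq_0 numeral_eq_Suc)
end

locale shilla3 = drg3 G b c for G :: "'v::finite \<Rightarrow> 'v \<Rightarrow> bool" and b c +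
  fixes \<theta> :: "nat \<Rightarrow> real"
  assumes eig_dec: "\<theta> 0 > \<theta> 1" "\<theta> 1 > \<theta> 2" "\<theta> 2 > \<theta> 3"
    and eig_all: "\<theta> ` {0..3} = eigenvalues_of (adj_matrix G)"
begin

lemma th_lt: "i < j \<Longrightarrow> j \<le> 3 \<Longrightarrow> \<theta> j < \<theta> i"
proof -
  assume "i < j" "j \<le> 3"
  then have "i = 0 \<and> j = 1 \<or> i = 0 \<and> j = 2 \<or> i = 0 \<and> j = 3 \<or> i = 1 \<and> j = 2 \<or> i = 1 \<and> j = 3 \<or> i = 2 \<and> j = 3"
    by presburger
  then show ?thesis using eig_dec by (elim disjE; simp; linarith)
qed

lemma th_inj: "i \<le> 3 \<Longrightarrow> j \<le> 3 \<Longrightarrow> \<theta> i = \<theta> j \<Longrightarrow> i = j"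
  using th_lt[of i j] th_lt[of j i] by (cases "i < j"; cases "j < i") auto

lemma th_card: "card (\<theta> ` {..3}) = 4"
proof -
  have "inj_on \<theta> {..3}" using th_inj by (auto simp: inj_on_def)
  then show ?thesis by (simp add: card_image)
qed

lemma eigvec: "h \<le> 3 \<Longrightarrow> \<exists>v. v \<noteq> 0 \<and> A *v v = \<theta> h *\<^sub>R v"
proof -
  assume "h \<le> 3"
  then have "\<theta> h \<in> eigenvalues_of A" using eig_all by auto
  then show ?thesis unfolding eigenvalues_of_def by auto
qed

lemma Q_root: "h \<le> 3 \<Longrightarrow> poly Q (\<theta> h) = 0"
proof -
  assume "h \<le> 3"
  then obtain v where v: "v \<noteq> 0" "A *v v = \<theta> h *\<^sub>R v" using eigvec by blast
  have "poly Q (\<theta> h) *\<^sub>R v = 0" using pe_eig_vec[OF v(2), of Q] pe_Q by simp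
  then show ?thesis using v(1) by simp
qed

definition "P4 = (\<Prod>j\<le>3. [:- \<theta> j, 1:])"

lemma P4_deg: "degree P4 = 4" and P4_coeff: "coeff P4 4 = 1"
proof -
  show "degree P4 = 4" unfolding P4_def by (subst degree_prod_eq_sum_degree) auto
  moreover have "lead_coeff P4 = 1" unfolding P4_def by (simp add: lead_coeff_prod)
  ultimately show "coeff P4 4 = 1" by simp
qed

lemma Q_P4: "Q = smult (1 / (real (c 2) * real (c 3))) P4"
proof (rule poly_eqI_degree_lead_coeff[where n=4 and A="\<theta> ` {..3}"])
  show "coeff Q 4 = coeff (smult (1 / (real (c 2) * real (c 3))) P4) 4"
    by (simp add: Q_coeff4 P4_coeff)
  show "4 \<le> card (\<theta> ` {..3})" using th_card by simp
  show "degree Q \<le> 4" by (rule Q_deg)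
  show "degree (smult (1 / (real (c 2) * real (c 3))) P4) \<le> 4" using P4_deg by simp
  fix z assume "z \<in> \<theta> ` {..3}"
  then obtain h where "h \<le> 3" "z = \<theta> h" by auto
  then show "poly Q z = poly (smult (1 / (real (c 2) * real (c 3))) P4) z"
  proof -
    have "poly P4 (\<theta> h) = 0" unfolding P4_def poly_prod
      by (rule prod_zero) (use \<open>h \<le> 3\<close> in auto)
    then show ?thesis using Q_root[of h] \<open>h \<le> 3\<close> \<open>z = \<theta> h\<close> by simp
  qed
qed

lemma pe_P4: "pe P4 A = 0"
proof -
  have "P4 = smult (real (c 2) * real (c 3)) Q" using Q_P4 c2_pos c3_pos by simp
  then show ?thesis by (simp add: pe_Q pe_smult)
qed

definition "den h = (\<Prod>j\<in>{..3}-{h}. (\<theta> h - \<theta> j))"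
definition "Lag h = smult (1 / den h) (\<Prod>j\<in>{..3}-{h}. [:- \<theta> j, 1:])"
definition "E h = pe (Lag h) A"

lemma den_nz: "h \<le> 3 \<Longrightarrow> den h \<noteq> 0"
  unfolding den_def using th_inj by auto

lemma Lag_val: "l \<le> 3 \<Longrightarrow> h \<le> 3 \<Longrightarrow> poly (Lag l) (\<theta> h) = (if l = h then 1 else 0)"
proof -
  assume lh: "l \<le> 3" "h \<le> 3"
  show ?thesis
  proof (cases "l = h")
    case True then show ?thesis using den_nz[OF lh(1)] by (simp add: Lag_def poly_prod den_def)
  next
    case False
    then have "h \<in> {..3}-{l}" using lh by auto
    then have "(\<Prod>j\<in>{..3}-{l}. poly [:- \<theta> j, 1:] (\<theta> h)) = 0"
      by (intro prod_zero) auto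
    then show ?thesis using False by (simp add: Lag_def poly_prod)
  qed
qed

lemma Lag_deg: "h \<le> 3 \<Longrightarrow> degree (Lag h) \<le> 3"
proof -
  assume h3: "h \<le> 3"
  have "degree (\<Prod>j\<in>{..3}-{h}. [:- \<theta> j, 1:]) \<le> (\<Sum>j\<in>{..3}-{h}. degree [:- \<theta> j, 1:])"
    using degree_prod_sum_le[of "{..3}-{h}" "\<lambda>j. [:- \<theta> j, 1:]"] by (simp add: o_def)
  also have "\<dots> = card ({..3::nat}-{h})" by simp
  also have "\<dots> \<le> 3" using h3 by (auto simp: card_Diff_singleton)
  finally show ?thesis unfolding Lag_def by (meson degree_smult_le order_trans)
qed

lemma Lag_factor: "h \<le> 3 \<Longrightarrow> [:- \<theta> h, 1:] * Lag h = smult (1 / den h) P4"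
  unfolding Lag_def P4_def
  by (simp add: prod.remove[of "{..3}" h] mult_smult_right)

lemma AE: "h \<le> 3 \<Longrightarrow> A ** E h = \<theta> h *\<^sub>R E h"
proof -
  assume h: "h \<le> 3"
  have "pe ([:- \<theta> h, 1:] * Lag h) A = 0" unfolding Lag_factor[OF h] by (simp add: pe_smult pe_P4)
  then have "(A - \<theta> h *\<^sub>R mat 1) ** E h = 0"
    unfolding pe_mult E_def by (simp add: pe_pCons)
  then show ?thesis by (simp add: mat_diff_rdistrib mat_scale_left)
qed

lemma EE: "l \<le> 3 \<Longrightarrow> h \<le> 3 \<Longrightarrow> E l ** E h = (if l = h then E h else 0)"
  using pe_eig_mat[OF AE, of h "Lag l"] Lag_val[of l h] unfolding E_def by auto

lemma Lag_sum: "(\<Sum>h\<le>3. Lag h) = 1"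
proof (rule poly_eqI_degree[of "\<theta> ` {..3}"])
  fix x assume "x \<in> \<theta> ` {..3}"
  then obtain l where l: "l \<le> 3" "x = \<theta> l" by auto
  have "poly (\<Sum>h\<le>3. Lag h) x = (\<Sum>h\<le>3. if h = l then 1 else 0)"
    using Lag_val l by (simp add: poly_sum)
  also have "\<dots> = 1" using l by simp
  finally show "poly (\<Sum>h\<le>3. Lag h) x = poly 1 x" by simp
next
  show "degree (\<Sum>h\<le>3. Lag h) < card (\<theta> ` {..3})"
    using th_card degree_sum_le[of "{..3}" Lag 3] Lag_deg by fastforce
  show "degree (1::real poly) < card (\<theta> ` {..3})" using th_card by simp
qed

lemma E_sum: "(\<Sum>h\<le>3. E h) = mat 1"
proof -
  have "pe (\<Sum>h\<in>S. Lag h) A = (\<Sum>h\<in>S. E h)" if "finite S" for S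
    using that by (induction S rule: finite_induct) (simp_all add: pe_add E_def)
  then show ?thesis using Lag_sum pe_one by (metis finite_atMost)
qed

lemma E_vec: "l \<le> 3 \<Longrightarrow> h \<le> 3 \<Longrightarrow> A *v v = \<theta> h *\<^sub>R v \<Longrightarrow> E l *v v = (if l = h then v else 0)"
  using pe_eig_vec[of A v "\<theta> h" "Lag l"] Lag_val[of l h] unfolding E_def by auto

lemma E_nz: "h \<le> 3 \<Longrightarrow> E h \<noteq> 0"
proof
  assume h: "h \<le> 3" "E h = 0"
  obtain v where v: "v \<noteq> 0" "A *v v = \<theta> h *\<^sub>R v" using eigvec h by blast
  show False using E_vec[OF h(1) h(1) v(2)] h v by simp
qed

lemma E_sym: "transpose (E h) = E h"
  unfolding E_def by (rule pe_transpose[OF A_sym])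

end


context shilla3 begin

lemma EEh: "h \<le> 3 \<Longrightarrow> E h ** E h = E h" using EE by simp

lemma E_range: "h \<le> 3 \<Longrightarrow> range (\<lambda>v. E h *v v) = eigenspace_of A (\<theta> h)"
proof
  assume h: "h \<le> 3"
  show "range (\<lambda>v. E h *v v) \<subseteq> eigenspace_of A (\<theta> h)"
    using AE[OF h] by (auto simp: eigenspace_of_def matrix_vector_mul_assoc mat_scale_vec)
  show "eigenspace_of A (\<theta> h) \<subseteq> range (\<lambda>v. E h *v v)"
  proof
    fix w assume "w \<in> eigenspace_of A (\<theta> h)"
    then have "E h *v w = w" using E_vec[OF h h] by (auto simp: eigenspace_of_def)
    then show "w \<in> range (\<lambda>v. E h *v v)" by (metis rangeI)
  qed
qed

lemma eig_proj_E: "h \<le> 3 \<Longrightarrow> eig_proj A (\<theta> h) = E h"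
  unfolding eig_proj_def
proof (rule the_equality)
  assume h: "h \<le> 3"
  show "transpose (E h) = E h \<and> E h ** E h = E h \<and> range (\<lambda>v. E h *v v) = eigenspace_of A (\<theta> h)"
    using E_sym EEh[OF h] E_range[OF h] by simp
  fix P assume P: "transpose P = P \<and> P ** P = P \<and> range (\<lambda>v. P *v v) = eigenspace_of A (\<theta> h)"
  have fixE: "E h *v w = w" if "w \<in> eigenspace_of A (\<theta> h)" for w
    using E_vec[OF h h] that by (auto simp: eigenspace_of_def)
  have 1: "E h ** P = P"
  proof -
    have "(E h ** P) *v v = P *v v" for v
      using fixE[of "P *v v"] P by (auto simp: matrix_vector_mul_assoc[symmetric])
    then show ?thesis by (simp add: matrix_eq)
  qed
  have 2: "P ** E h = E h"
  proof -
    have "(P ** E h) *v v = E h *v v" for v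
    proof -
      have "E h *v v \<in> range (\<lambda>v. P *v v)" using E_range[OF h] P by auto
      then obtain u where u: "E h *v v = P *v u" by auto
      have "P *v (P *v u) = P *v u" using P by (simp add: matrix_vector_mul_assoc)
      then show ?thesis using u by (simp add: matrix_vector_mul_assoc[symmetric])
    qed
    then show ?thesis by (simp add: matrix_eq)
  qed
  have "P = transpose (E h ** P)" using 1 P by simp
  also have "\<dots> = P ** E h" using P E_sym by (simp add: matrix_transpose_mul)
  finally show "P = E h" using 2 by simp
qed

end


context drg3 begin
definition Dm :: "nat \<Rightarrow> real^'v^'v" where "Dm i = BM (\<lambda>j. if j = i then 1 else 0)"
definition Vp :: "nat \<Rightarrow> real poly" where
  "Vp i = (if i = 0 then 1 else if i = 1 then [:0,1:] else if i = 2 then V2 else V3)"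

lemma pe_Vp: "i \<le> 3 \<Longrightarrow> pe (Vp i) A = Dm i"
proof -
  assume "i \<le> 3"
  then have "i = 0 \<or> i = 1 \<or> i = 2 \<or> i = 3" by linarith
  then show ?thesis
    using pe_V2 pe_V3 BM_0 BM_1 unfolding Vp_def Dm_def D2_def D3_def
    by (auto simp: pe_one pe_X)
qed

lemma BM_sum: "BM f = (\<Sum>i\<le>3. f i *\<^sub>R Dm i)"
proof -
  have "(\<Sum>i\<le>3. f i *\<^sub>R Dm i) = BM (\<lambda>j. \<Sum>i\<le>3. f i * (if j = i then 1 else 0))"
    unfolding Dm_def BM_def by (simp add: vec_eq_iff sum_component)
  also have "\<dots> = BM f"
  proof (rule BM_cong)
    fix j :: nat assume "j \<le> 3"
    have "(\<Sum>i\<le>3. f i * (if j = i then 1 else 0)) = (\<Sum>i\<le>3. if j = i then f i else 0)"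
      by (rule sum.cong) auto
    also have "\<dots> = f j" using \<open>j \<le> 3\<close> by (simp add: sum.delta)
    finally show "(\<Sum>i\<le>3. f i * (if j = i then 1 else 0)) = f j" .
  qed
  finally show ?thesis by simp
qed
end

context shilla3 begin

lemma Dm_E: "i \<le> 3 \<Longrightarrow> h \<le> 3 \<Longrightarrow> Dm i ** E h = poly (Vp i) (\<theta> h) *\<^sub>R E h"
  using pe_eig_mat[OF AE, of h "Vp i"] pe_Vp by simp

lemma Dm_sum: "i \<le> 3 \<Longrightarrow> Dm i = (\<Sum>h\<le>3. poly (Vp i) (\<theta> h) *\<^sub>R E h)"
proof -
  assume i: "i \<le> 3"
  have "Dm i = Dm i ** (\<Sum>h\<le>3. E h)" by (simp add: E_sum)
  also have "\<dots> = (\<Sum>h\<le>3. Dm i ** E h)" by (simp add: mat_sum_ldistrib)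
  also have "\<dots> = (\<Sum>h\<le>3. poly (Vp i) (\<theta> h) *\<^sub>R E h)" using Dm_E i by (intro sum.cong) auto
  finally show ?thesis .
qed

definition "e = (SOME f. E 1 = BM f)"
lemma E1_BM: "E 1 = BM e"
  using pe_BM[of "Lag 1"] unfolding e_def E_def by (rule someI_ex)

definition "n = real CARD('v)"
definition "qq h = (if h \<le> 3 then n * (\<Sum>i\<le>3. (e i)^2 * poly (Vp i) (\<theta> h)) else 0)"

lemma n_pos: "n > 0" unfolding n_def by simp

lemma had_E1: "hadamard (E 1) (E 1) = (1 / n) *\<^sub>R (\<Sum>l\<le>3. qq l *\<^sub>R E l)"
proof -
  have "hadamard (E 1) (E 1) = BM (\<lambda>i. (e i)^2)"
    unfolding E1_BM hadamard_def BM_def by (simp add: vec_eq_iff power2_eq_square)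
  also have "\<dots> = (\<Sum>i\<le>3. (e i)^2 *\<^sub>R Dm i)" by (rule BM_sum)
  also have "\<dots> = (\<Sum>i\<le>3. (e i)^2 *\<^sub>R (\<Sum>h\<le>3. poly (Vp i) (\<theta> h) *\<^sub>R E h))"
    using Dm_sum by (intro sum.cong) auto
  also have "\<dots> = (\<Sum>i\<le>3. \<Sum>h\<le>3. ((e i)^2 * poly (Vp i) (\<theta> h)) *\<^sub>R E h)"
    by (simp only: scaleR_sum_right scaleR_scaleR)
  also have "\<dots> = (\<Sum>h\<le>3. \<Sum>i\<le>3. ((e i)^2 * poly (Vp i) (\<theta> h)) *\<^sub>R E h)"
    by (rule sum.swap)
  also have "\<dots> = (\<Sum>h\<le>3. (\<Sum>i\<le>3. (e i)^2 * poly (Vp i) (\<theta> h)) *\<^sub>R E h)"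
    by (simp only: scaleR_sum_left)
  also have "\<dots> = (\<Sum>l\<le>3. (1 / n) *\<^sub>R (qq l *\<^sub>R E l))"
  proof (rule sum.cong[OF refl])
    fix l :: nat assume "l \<in> {..3}"
    then show "(\<Sum>i\<le>3. (e i)^2 * poly (Vp i) (\<theta> l)) *\<^sub>R E l = (1 / n) *\<^sub>R (qq l *\<^sub>R E l)"
      using n_pos unfolding qq_def by simp
  qed
  also have "\<dots> = (1 / n) *\<^sub>R (\<Sum>l\<le>3. qq l *\<^sub>R E l)"
    by (simp only: scaleR_sum_right)
  finally show ?thesis .
qed

lemma scale_E_cancel: "h \<le> 3 \<Longrightarrow> x *\<^sub>R E h = y *\<^sub>R E h \<Longrightarrow> x = y"
proof -
  assume h: "h \<le> 3" "x *\<^sub>R E h = y *\<^sub>R E h"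
  then have "(x - y) *\<^sub>R E h = 0" by (simp add: scaleR_diff_left)
  then show "x = y" using E_nz[OF h(1)] by simp
qed

lemma krein_qq: "krein A \<theta> 3 1 1 h = qq h"
proof -
  have eq: "(THE q :: nat \<Rightarrow> real. (\<forall>l>3. q l = 0) \<and>
      hadamard (eig_proj A (\<theta> 1)) (eig_proj A (\<theta> 1))
        = (1 / real CARD('v)) *\<^sub>R (\<Sum>l\<le>3. q l *\<^sub>R eig_proj A (\<theta> l))) = qq"
  proof (rule the_equality)
    have "(\<Sum>l\<le>3. qq l *\<^sub>R eig_proj A (\<theta> l)) = (\<Sum>l\<le>3. qq l *\<^sub>R E l)"
      using eig_proj_E by (intro sum.cong) auto
    then show "(\<forall>l>3. qq l = 0) \<and> hadamard (eig_proj A (\<theta> 1)) (eig_proj A (\<theta> 1))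
        = (1 / real CARD('v)) *\<^sub>R (\<Sum>l\<le>3. qq l *\<^sub>R eig_proj A (\<theta> l))"
      using had_E1 eig_proj_E[of 1] unfolding n_def by (simp add: qq_def)
  next
    fix q :: "nat \<Rightarrow> real"
    assume q: "(\<forall>l>3. q l = 0) \<and> hadamard (eig_proj A (\<theta> 1)) (eig_proj A (\<theta> 1))
        = (1 / real CARD('v)) *\<^sub>R (\<Sum>l\<le>3. q l *\<^sub>R eig_proj A (\<theta> l))"
    have hq: "hadamard (E 1) (E 1) = (1 / n) *\<^sub>R (\<Sum>l\<le>3. q l *\<^sub>R E l)"
    proof -
      have "(\<Sum>l\<le>3. q l *\<^sub>R eig_proj A (\<theta> l)) = (\<Sum>l\<le>3. q l *\<^sub>R E l)"
        using eig_proj_E by (intro sum.cong) auto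
      then show ?thesis using q eig_proj_E[of 1] unfolding n_def by simp
    qed
    have key: "(\<Sum>l\<le>3. r l *\<^sub>R E l) ** E h = r h *\<^sub>R E h" if "h \<le> 3" for r h
    proof -
      have "(\<Sum>l\<le>3. r l *\<^sub>R E l) ** E h = (\<Sum>l\<le>3. r l *\<^sub>R (E l ** E h))"
        by (simp add: mat_sum_rdistrib mat_scale_left)
      also have "\<dots> = (\<Sum>l\<le>3. if l = h then r h *\<^sub>R E h else 0)"
        using EE that by (intro sum.cong) auto
      also have "\<dots> = r h *\<^sub>R E h" using that by simp
      finally show ?thesis .
    qed
    show "q = qq"
    proof
      fix h
      show "q h = qq h"
      proof (cases "h \<le> 3")
        case True
        have "(1 / n) *\<^sub>R (\<Sum>l\<le>3. q l *\<^sub>R E l) = (1 / n) *\<^sub>R (\<Sum>l\<le>3. qq l *\<^sub>R E l)"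
          using hq had_E1 by simp
        then have "(\<Sum>l\<le>3. q l *\<^sub>R E l) = (\<Sum>l\<le>3. qq l *\<^sub>R E l)"
          using n_pos by simp
        then have "(\<Sum>l\<le>3. q l *\<^sub>R E l) ** E h = (\<Sum>l\<le>3. qq l *\<^sub>R E l) ** E h" by simp
        then have "q h *\<^sub>R E h = qq h *\<^sub>R E h" unfolding key[OF True] .
        then show ?thesis by (rule scale_E_cancel[OF True])
      next
        case False then show ?thesis using q by (simp add: qq_def)
      qed
    qed
  qed
  show ?thesis unfolding krein_def eq ..
qed

end


lemma psd_proj: "transpose (E::real^'n^'n) = E \<Longrightarrow> E ** E = E \<Longrightarrow> u \<bullet> (E *v u) \<ge> 0"
proof -
  assume s: "transpose E = E" and i: "E ** E = E"
  have "u \<bullet> (E *v u) = u \<bullet> (E *v (E *v u))" using i by (simp add: matrix_vector_mul_assoc)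
  also have "\<dots> = (u v* E) \<bullet> (E *v u)" by (simp add: dot_lmul_matrix)
  also have "u v* E = u v* transpose E" using s by simp
  also have "\<dots> = E *v u" by simp
  finally show ?thesis by simp
qed

lemma schur: "transpose (E::real^'n^'n) = E \<Longrightarrow> E ** E = E \<Longrightarrow> w \<bullet> (hadamard E E *v w) \<ge> 0"
proof -
  assume s: "transpose E = E" and i: "E ** E = E"
  have Es: "E $ a $ b = E $ b $ a" for a b using arg_cong[OF s, of "\<lambda>M. M $ b $ a"] by (simp add: transpose_def)
  have Ei: "E $ a $ b = (\<Sum>c\<in>UNIV. E $ a $ c * E $ b $ c)" for a b
  proof -
    have "E $ a $ b = (E ** E) $ a $ b" using i by simp
    also have "\<dots> = (\<Sum>c\<in>UNIV. E $ a $ c * E $ b $ c)"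
      unfolding matrix_matrix_mult_def using Es by simp
    finally show ?thesis .
  qed
  define u where "u c = (\<chi> a. w $ a * E $ a $ c)" for c
  have "w \<bullet> (hadamard E E *v w) = (\<Sum>a\<in>UNIV. \<Sum>b\<in>UNIV. w $ a * E $ a $ b * E $ a $ b * w $ b)"
    unfolding inner_vec_def hadamard_def matrix_vector_mult_def
    by (simp add: sum_distrib_left mult.assoc)
  also have "\<dots> = (\<Sum>a\<in>UNIV. \<Sum>b\<in>UNIV. \<Sum>c\<in>UNIV. w $ a * E $ a $ b * (E $ a $ c * E $ b $ c) * w $ b)"
  proof (rule sum.cong[OF refl], rule sum.cong[OF refl])
    fix a b
    have "w $ a * E $ a $ b * E $ a $ b * w $ b = w $ a * E $ a $ b * (\<Sum>c\<in>UNIV. E $ a $ c * E $ b $ c) * w $ b"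
      by (simp only: Ei[of a b, symmetric])
    also have "\<dots> = (\<Sum>c\<in>UNIV. w $ a * E $ a $ b * (E $ a $ c * E $ b $ c) * w $ b)"
      by (simp add: sum_distrib_left sum_distrib_right)
    finally show "w $ a * E $ a $ b * E $ a $ b * w $ b = (\<Sum>c\<in>UNIV. w $ a * E $ a $ b * (E $ a $ c * E $ b $ c) * w $ b)" .
  qed
  also have "\<dots> = (\<Sum>a\<in>UNIV. \<Sum>c\<in>UNIV. \<Sum>b\<in>UNIV. w $ a * E $ a $ b * (E $ a $ c * E $ b $ c) * w $ b)"
    by (rule sum.cong[OF refl], rule sum.swap)
  also have "\<dots> = (\<Sum>c\<in>UNIV. \<Sum>a\<in>UNIV. \<Sum>b\<in>UNIV. w $ a * E $ a $ b * (E $ a $ c * E $ b $ c) * w $ b)"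
    by (rule sum.swap)
  also have "\<dots> = (\<Sum>c\<in>UNIV. u c \<bullet> (E *v u c))"
    unfolding u_def inner_vec_def matrix_vector_mult_def
    by (simp add: sum_distrib_left mult_ac)
  also have "\<dots> \<ge> 0" using psd_proj[OF s i] by (simp add: sum_nonneg)
  finally show ?thesis .
qed

context shilla3 begin

definition "m = (\<Sum>x\<in>UNIV. E 1 $ x $ x)"

lemma e_formula: "i \<le> 3 \<Longrightarrow> e i * n * poly (Vp i) (real (b 0)) = poly (Vp i) (\<theta> 1) * m"
proof -
  assume i: "i \<le> 3"
  have Done: "Dm i *v one_vec = poly (Vp i) (real (b 0)) *\<^sub>R one_vec"
    using pe_eig_vec[OF A_one, of "Vp i"] pe_Vp[OF i] by simp
  have diag: "(Dm i ** E 1) $ x $ x = e i * poly (Vp i) (real (b 0))" for x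
  proof -
    have "(Dm i ** E 1) $ x $ x = (\<Sum>y\<in>UNIV. (if d x y = i then 1 else 0) * e (d y x))"
      unfolding matrix_matrix_mult_def Dm_def E1_BM BM_def by simp
    also have "\<dots> = (\<Sum>y\<in>UNIV. e i * (if d x y = i then 1 else 0))"
      by (rule sum.cong[OF refl]) (auto simp: d_sym)
    also have "\<dots> = e i * (\<Sum>y\<in>UNIV. (if d x y = i then 1 else 0))"
      by (simp only: sum_distrib_left)
    also have "(\<Sum>y\<in>UNIV. (if d x y = i then 1 else 0)) = (Dm i *v one_vec) $ x"
      unfolding matrix_vector_mult_def Dm_def BM_def one_vec_def by simp
    finally show ?thesis using Done by (simp add: one_vec_def)
  qed
  have diag2: "(Dm i ** E 1) $ x $ x = poly (Vp i) (\<theta> 1) * E 1 $ x $ x" for x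
    using Dm_E[OF i, of 1] by simp
  have "(\<Sum>x\<in>(UNIV::'v set). e i * poly (Vp i) (real (b 0))) = (\<Sum>x\<in>UNIV. poly (Vp i) (\<theta> 1) * E 1 $ x $ x)"
  proof (rule sum.cong[OF refl])
    fix x show "e i * poly (Vp i) (real (b 0)) = poly (Vp i) (\<theta> 1) * E 1 $ x $ x"
      using diag[of x] diag2[of x] by linarith
  qed
  then show ?thesis unfolding m_def n_def by (simp add: sum_distrib_left mult_ac)
qed

lemma m_nz: "m \<noteq> 0"
proof -
  have Es: "E 1 $ a $ b = E 1 $ b $ a" for a b using arg_cong[OF E_sym[of 1], of "\<lambda>M. M $ b $ a"] by (simp add: transpose_def)
  have "m = (\<Sum>x\<in>UNIV. (E 1 ** E 1) $ x $ x)" unfolding m_def using EEh[of 1] by simp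
  also have "\<dots> = (\<Sum>x\<in>UNIV. \<Sum>y\<in>UNIV. (E 1 $ x $ y)^2)"
    unfolding matrix_matrix_mult_def using Es by (simp add: power2_eq_square)
  finally have meq: "m = (\<Sum>x\<in>UNIV. \<Sum>y\<in>UNIV. (E 1 $ x $ y)^2)" .
  obtain x0 y0 where xy: "E 1 $ x0 $ y0 \<noteq> 0"
    using E_nz[of 1] by (auto simp: vec_eq_iff)
  have pos1: "0 < (\<Sum>y\<in>UNIV. (E 1 $ x0 $ y)^2)"
    by (rule sum_pos2[of _ y0]) (use xy in auto)
  have "0 < (\<Sum>x\<in>UNIV. \<Sum>y\<in>UNIV. (E 1 $ x $ y)^2)"
    by (rule sum_pos2[of _ x0]) (use pos1 in \<open>auto intro: sum_nonneg\<close>)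
  then show ?thesis using meq by simp
qed

lemma qq3_nonneg: "qq 3 \<ge> 0"
proof -
  obtain w where w: "w \<noteq> 0" "A *v w = \<theta> 3 *\<^sub>R w" using eigvec[of 3] by auto
  have "hadamard (E 1) (E 1) *v w = (1 / n) *\<^sub>R (\<Sum>l\<le>3. qq l *\<^sub>R (E l *v w))"
    unfolding had_E1 by (simp add: mat_scale_vec mat_sum_vec)
  also have "(\<Sum>l\<le>3. qq l *\<^sub>R (E l *v w)) = (\<Sum>l\<le>(3::nat). if l = 3 then qq 3 *\<^sub>R w else 0)"
  proof (rule sum.cong[OF refl])
    fix l :: nat assume "l \<in> {..3}"
    then show "qq l *\<^sub>R (E l *v w) = (if l = 3 then qq 3 *\<^sub>R w else 0)"
      using E_vec[of l 3 w] w(2) by auto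
  qed
  also have "\<dots> = qq 3 *\<^sub>R w" by simp
  finally have "w \<bullet> (hadamard (E 1) (E 1) *v w) = (qq 3 / n) * (w \<bullet> w)" by simp
  moreover have "w \<bullet> (hadamard (E 1) (E 1) *v w) \<ge> 0" using schur[OF E_sym EEh] by simp
  moreover have "w \<bullet> w > 0" using w(1) by simp
  ultimately show ?thesis using n_pos by (simp add: zero_le_mult_iff zero_le_divide_iff)
qed

end


lemma solve_e: "(x::real) * n * v = t * m \<Longrightarrow> n * v \<noteq> 0 \<Longrightarrow> x = t * m / (n * v)"
  by (simp add: field_simps)

lemma sum4: "(\<Sum>i\<le>(3::nat). f i) = f 0 + f 1 + f 2 + (f 3 :: real)"
  by (simp add: numeral_3_eq_3 numeral_2_eq_2 atMost_Suc add_ac)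

lemma alg:
  fixes k b1 b2 c2 c3 a3 bb th m n z :: real
  assumes k: "k = bb * a3" and nz: "bb \<noteq> 0" "a3 \<noteq> 0" "b1 > 0" "b2 > 0" "c2 > 0" "c3 > 0" "n > 0" "m \<noteq> 0"
  shows "n * ((m / n)^2 * 1 + (a3 * m / (n * k))^2 * th + 0^2 * z + ((- b1 * a3 / c3) * m / (n * (k * b1 * b2 / (c2 * c3))))^2 * (b2 * (th + bb) / c2))
       = (m^2 / n) * (th * (b2 + c2) + bb * (bb * b2 + c2)) / (bb^2 * b2)"
  using nz unfolding k by (simp add: field_simps power2_eq_square)

context shilla3 begin

lemma V_vals:
  "poly (Vp 0) x = 1" "poly (Vp 1) x = x"
  "poly (Vp 2) x = (x^2 - aa 1 * x - real (b 0)) / real (c 2)"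
  "poly (Vp 3) x = ((x - aa 2) * ((x^2 - aa 1 * x - real (b 0)) / real (c 2)) - real (b 1) * x) / real (c 3)"
  unfolding Vp_def V2_def V3_def using c2_pos c3_pos by (simp_all add: field_simps power2_eq_square)

lemma aa1: "aa 1 = real (b 0) - real (b 1) - 1" unfolding aa_def using pos_facts by simp
lemma aa2: "aa 2 = real (b 0) - real (b 2) - real (c 2)" unfolding aa_def by simp

end

locale shilla3s = shilla3 +
  assumes shilla: "\<theta> 1 = aa 3"
begin

abbreviation "k \<equiv> real (b 0)"
abbreviation "bb \<equiv> aa 3 - aa 1"

lemma V2_a3: "aa 3 ^ 2 - aa 1 * aa 3 - k = 0"
proof -
  have "poly Q (aa 3) = 0" using Q_root[of 1] shilla by simp
  then have "real (b 2) * poly V2 (aa 3) = 0" unfolding Q_def by (simp add: algebra_simps)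
  then have "poly V2 (aa 3) = 0" using pos_facts by simp
  then have "poly (Vp 2) (aa 3) = 0" by (simp add: Vp_def)
  then have "(aa 3^2 - aa 1 * aa 3 - k) / real (c 2) = 0" unfolding V_vals .
  then show ?thesis using c2_pos by simp
qed

lemma k_eq: "k = bb * aa 3" using V2_a3 by (simp add: algebra_simps power2_eq_square)

lemma bb_nz: "bb \<noteq> 0" and a3_nz: "aa 3 \<noteq> 0"
  using k_eq pos_facts by auto

lemma V3_root: "h \<le> 3 \<Longrightarrow> h \<noteq> 1 \<Longrightarrow> poly (Vp 3) (\<theta> h) = real (b 2) * (\<theta> h + bb) / real (c 2)"
proof -
  assume h: "h \<le> 3" "h \<noteq> 1"
  have ne: "\<theta> h \<noteq> aa 3" using th_inj[of h 1] h shilla by auto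
  have kk: "k = aa 3^2 - aa 1 * aa 3" using V2_a3 by simp
  have V2f: "poly V2 x = (x - aa 3) * (x + bb) / real (c 2)" for x
  proof -
    have "poly V2 x = poly (Vp 2) x" by (simp add: Vp_def)
    also have "\<dots> = (x^2 - aa 1 * x - k) / real (c 2)" by (rule V_vals)
    also have "x^2 - aa 1 * x - k = (x - aa 3) * (x + bb)"
      by (simp add: kk algebra_simps power2_eq_square)
    finally show ?thesis .
  qed
  have "poly Q (\<theta> h) = 0" using Q_root h by simp
  then have "(\<theta> h - aa 3) * poly V3 (\<theta> h) = real (b 2) * poly V2 (\<theta> h)"
    unfolding Q_def by (simp add: algebra_simps)
  then have "poly V3 (\<theta> h) = real (b 2) * poly V2 (\<theta> h) / (\<theta> h - aa 3)"
    using ne by (simp add: field_simps)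
  also have "\<dots> = real (b 2) * (\<theta> h + bb) / real (c 2)"
    unfolding V2f using ne c2_pos by (simp add: field_simps)
  finally show ?thesis unfolding Vp_def by simp
qed

lemma qq_formula: "h \<le> 3 \<Longrightarrow> h \<noteq> 1 \<Longrightarrow>
   qq h = (m^2 / n) * (\<theta> h * (real (b 2) + real (c 2)) + bb * (bb * real (b 2) + real (c 2))) / (bb^2 * real (b 2))"
proof -
  assume h: "h \<le> 3" "h \<noteq> 1"
  have b1: "real (b 1) > 0" and b2: "real (b 2) > 0" and kpos: "k > 0" using pos_facts by auto
  have c1: "real (c 2) > 0" "real (c 3) > 0" using c2_pos c3_pos by auto
  have Vk1: "poly (Vp 1) k = k" using V_vals by simp
  have Vk2: "poly (Vp 2) k = k * real (b 1) / real (c 2)"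
    unfolding V_vals aa1 using c1 by (simp add: field_simps power2_eq_square)
  have Vk3: "poly (Vp 3) k = k * real (b 1) * real (b 2) / (real (c 2) * real (c 3))"
    unfolding V_vals aa1 aa2 using c1 by (simp add: field_simps power2_eq_square)
  have Vt2: "poly (Vp 2) (\<theta> 1) = 0" unfolding V_vals shilla using V2_a3 by (simp add: power2_eq_square)
  have Vt3: "poly (Vp 3) (\<theta> 1) = - real (b 1) * aa 3 / real (c 3)"
    unfolding V_vals shilla using V2_a3 by (simp add: power2_eq_square)
  have e0: "e 0 = m / n" using e_formula[of 0] n_pos unfolding V_vals by (simp add: field_simps)
  have e1: "e 1 = aa 3 * m / (n * k)"
    using solve_e[OF e_formula[of 1]] n_pos kpos unfolding Vk1 V_vals(2) shilla by simp
  have e2: "e 2 = 0" using e_formula[of 2] n_pos kpos b1 c1 unfolding Vk2 Vt2 by simp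
  have e3: "e 3 = (- real (b 1) * aa 3 / real (c 3)) * m / (n * (k * real (b 1) * real (b 2) / (real (c 2) * real (c 3))))"
    using solve_e[OF e_formula[of 3]] n_pos kpos b1 b2 c1 unfolding Vk3 Vt3 by simp
  have "qq h = n * ((e 0)^2 * 1 + (e 1)^2 * \<theta> h + (e 2)^2 * poly (Vp 2) (\<theta> h) + (e 3)^2 * poly (Vp 3) (\<theta> h))"
    unfolding qq_def sum4 V_vals(1,2) using h by simp
  also have "\<dots> = (m^2 / n) * (\<theta> h * (real (b 2) + real (c 2)) + bb * (bb * real (b 2) + real (c 2))) / (bb^2 * real (b 2))"
    unfolding e0 e1 e2 e3 V3_root[OF h] k_eq
    by (rule alg[OF refl bb_nz a3_nz b1 b2 c1 n_pos m_nz, unfolded k_eq])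
  finally show ?thesis .
qed

end


theorem proposition15:
  fixes G :: "'v::finite \<Rightarrow> 'v \<Rightarrow> bool"
    and b c :: "nat \<Rightarrow> nat"
    and \<theta> :: "nat \<Rightarrow> real"
  assumes drg: "distance_regular G b c"
    and diam: "graph_diameter G = 3"
    and shilla: "\<theta> 1 = real_of_int (isect_a b c 3)"
    and eig_dec: "\<theta> 0 > \<theta> 1" "\<theta> 1 > \<theta> 2" "\<theta> 2 > \<theta> 3"
    and eig_all: "\<theta> ` {0..3} = eigenvalues_of (adj_matrix G)"
  shows "let bb = real_of_int (isect_a b c 3 - isect_a b c 1);
             bound = - (bb * (bb * real (b 2) + real (c 2)) / (real (b 2) + real (c 2)))
         in krein (adj_matrix G) \<theta> 3 1 1 2 > 0
            \<and> (krein (adj_matrix G) \<theta> 3 1 1 3 \<ge> 0 \<longleftrightarrow> \<theta> 3 \<ge> bound)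
            \<and> \<theta> 3 \<ge> bound"
proof -
  interpret S: shilla3s G b c \<theta>
  proof unfold_locales
    show "distance_regular G b c" "graph_diameter G = 3" by fact+
    show "\<theta> 1 < \<theta> 0" "\<theta> 2 < \<theta> 1" "\<theta> 3 < \<theta> 2" using eig_dec by auto
    show "\<theta> ` {0..3} = eigenvalues_of (adj_matrix G)" by fact
    show "\<theta> 1 = drg3.aa b c 3" using shilla unfolding drg3.aa_def[OF drg3.intro[OF drg diam]] isect_a_def by simp
  qed
  have aai: "real_of_int (isect_a b c i) = S.aa i" for i unfolding isect_a_def S.aa_def by simp
  define bb where "bb = real_of_int (isect_a b c 3 - isect_a b c 1)"
  have bbe: "bb = S.aa 3 - S.aa 1" unfolding bb_def of_int_diff aai ..
  define B2 where "B2 = real (b 2)"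
  define C2 where "C2 = real (c 2)"
  have B2p: "B2 > 0" and C2p: "C2 > 0" unfolding B2_def C2_def using S.pos_facts by auto
  have bbnz: "bb \<noteq> 0" using S.bb_nz bbe by simp
  define N where "N h = \<theta> h * (B2 + C2) + bb * (bb * B2 + C2)" for h
  define F where "F = (S.m^2 / S.n) / (bb^2 * B2)"
  have Fp: "F > 0"
  proof -
    have "S.m^2 > 0" "bb^2 > 0" using S.m_nz bbnz by simp_all
    then show ?thesis unfolding F_def using S.n_pos B2p by (intro divide_pos_pos mult_pos_pos) auto
  qed
  have qf: "krein (adj_matrix G) \<theta> 3 1 1 h = F * N h" if "h \<le> 3" "h \<noteq> 1" for h
    unfolding S.krein_qq S.qq_formula[OF that] F_def N_def bbe B2_def C2_def by simp
  have "krein (adj_matrix G) \<theta> 3 1 1 3 \<ge> 0" using S.krein_qq S.qq3_nonneg by simp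
  then have N3: "N 3 \<ge> 0" using qf[of 3] Fp by (simp add: zero_le_mult_iff)
  define bound where "bound = - (bb * (bb * B2 + C2) / (B2 + C2))"
  have bd: "\<theta> 3 \<ge> bound"
  proof -
    have "- (bb * (bb * B2 + C2)) \<le> \<theta> 3 * (B2 + C2)" using N3 unfolding N_def by linarith
    moreover have pos: "B2 + C2 > 0" using B2p C2p by simp
    ultimately show ?thesis unfolding bound_def minus_divide_left pos_divide_le_eq[OF pos]
      by (simp add: mult.commute)
  qed
  have "N 2 > N 3" unfolding N_def using eig_dec B2p C2p by (simp add: mult_strict_right_mono)
  then have q2: "krein (adj_matrix G) \<theta> 3 1 1 2 > 0" using qf[of 2] Fp N3 by simp
  have q3: "krein (adj_matrix G) \<theta> 3 1 1 3 \<ge> 0" using qf[of 3] Fp N3 by simp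
  show ?thesis unfolding Let_def using q2 q3 bd unfolding bound_def bb_def B2_def C2_def by simp
qed


end
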